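(* Let $k$ be a field of characteristic $p>2$ ($p$ prime) and let $m\ge1$. Then for any $i$ with $1\le i\le 2m$, $$w_m(x_1,x_2,\ldots,x_ix_{2m+1},\ldots,x_{2m})\in\{x_0^pw_j\mid j\ge0\}^{S_0}+T(G),$$ while for any $\alpha\in k$, $$w_m(x_1,x_2,\ldots,\alpha x_i,\ldots,x_{2m})=\alpha^pw_m(x_1,x_2,\ldots,x_i,\ldots,x_{2m}).$$
   Context: $X=\{x_i\mid i\ge0\}$ countably infinite; $k_1\langle X\rangle$ (resp. $k_0\langle X\rangle\subseteq k_1\langle X\rangle$) the free unitary (resp. nonunitary) associative $k$-algebra on $X$. $[a,b]=ab-ba$. $H^{S_0}$ is the smallest subspace of $k_0\langle X\rangle$ containing $H$ and invariant under all endomorphisms of $k_0\langle X\rangle$. $G$ is the infinite-dimensional unitary Grassmann algebra over $k$ (basis $1$ and the products $e_{i_1}\cdots e_{i_n}$, $n\ge1$, $i_1<\dots<i_n$, with $e_ie_j=-e_je_i$, $e_i^2=0$); $T(G)$ is the set of $f\in k_1\langle X\rangle$ in the kernel of every unitary homomorphism $k_1\langle X\rangle\to G$. $\kappa(u,v)=[u,v]u^{p-1}v^{p-1}$, $w_m=\prod_{r=1}^m\kappa(x_{2r-1},x_{2r})$ for $m\ge1$, $w_0=1$, and $w_m(u_1,\ldots,u_{2m})$ is the image of $w_m$ under $x_j\mapsto u_j$ ($1\le j\le 2m$); in the displayed expressions only the $i$-th argument is changed. *)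

theory Defs
  imports Main "HOL-Computational_Algebra.Primes" "HOL-Library.Poly_Mapping" "HOL-Library.FSet"
begin

text \<open>Noncommutative polynomials: finitely supported k-valued functions on words
  (lists of variable indices). The word [i] is the variable x_i, [] is the unit.\<close>

type_synonym 'k ncpoly = "nat list \<Rightarrow>\<^sub>0 'k"

definition ncsmult :: "'k::field \<Rightarrow> 'k ncpoly \<Rightarrow> 'k ncpoly" where
  "ncsmult c f = Poly_Mapping.map (\<lambda>a. c * a) f"

definition ncmul :: "'k::field ncpoly \<Rightarrow> 'k ncpoly \<Rightarrow> 'k ncpoly" where
  "ncmul f g = (\<Sum>u\<in>Poly_Mapping.keys f. \<Sum>v\<in>Poly_Mapping.keys g. Poly_Mapping.single (u @ v) (Poly_Mapping.lookup f u * Poly_Mapping.lookup g v))"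

definition ncone :: "'k::field ncpoly" where
  "ncone = Poly_Mapping.single [] 1"

definition ncvar :: "nat \<Rightarrow> 'k::field ncpoly" where
  "ncvar i = Poly_Mapping.single [i] 1"

fun ncpow :: "'k::field ncpoly \<Rightarrow> nat \<Rightarrow> 'k ncpoly" where
  "ncpow f 0 = ncone"
| "ncpow f (Suc n) = ncmul (ncpow f n) f"

definition nccomm :: "'k::field ncpoly \<Rightarrow> 'k ncpoly \<Rightarrow> 'k ncpoly" where
  "nccomm a b = ncmul a b - ncmul b a"

definition k0 :: "'k::field ncpoly set" where
  "k0 = {f. Poly_Mapping.lookup f [] = 0}"

definition kappa :: "nat \<Rightarrow> 'k::field ncpoly \<Rightarrow> 'k ncpoly \<Rightarrow> 'k ncpoly" where
  "kappa p u v = ncmul (ncmul (nccomm u v) (ncpow u (p - 1))) (ncpow v (p - 1))"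

text \<open>wfun p m u = \<Prod>_{r=1..m} kappa(u_{2r-1}, u_{2r}) (ordered product, r = 1 leftmost),
  i.e. w_m(u_1,...,u_{2m}); w_0 = 1. w_m itself is wfun p m ncvar.\<close>

fun wfun :: "nat \<Rightarrow> nat \<Rightarrow> (nat \<Rightarrow> 'k::field ncpoly) \<Rightarrow> 'k ncpoly" where
  "wfun p 0 u = ncone"
| "wfun p (Suc m) u = ncmul (wfun p m u) (kappa p (u (2*m+1)) (u (2*m+2)))"

definition endo_k0 :: "('k::field ncpoly \<Rightarrow> 'k ncpoly) \<Rightarrow> bool" where
  "endo_k0 \<phi> \<longleftrightarrow>
     (\<forall>f\<in>k0. \<phi> f \<in> k0) \<and>
     (\<forall>f\<in>k0. \<forall>g\<in>k0. \<phi> (f + g) = \<phi> f + \<phi> g) \<and>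
     (\<forall>c. \<forall>f\<in>k0. \<phi> (ncsmult c f) = ncsmult c (\<phi> f)) \<and>
     (\<forall>f\<in>k0. \<forall>g\<in>k0. \<phi> (ncmul f g) = ncmul (\<phi> f) (\<phi> g))"

text \<open>Smallest subspace of k_0<X> containing H (assumed \<subseteq> k_0) and invariant under
  all endomorphisms of k_0<X>.\<close>

inductive_set S0closure :: "'k::field ncpoly set \<Rightarrow> 'k ncpoly set" for H where
  base: "h \<in> H \<Longrightarrow> h \<in> S0closure H"
| zero: "0 \<in> S0closure H"
| add: "f \<in> S0closure H \<Longrightarrow> g \<in> S0closure H \<Longrightarrow> f + g \<in> S0closure H"
| smult: "f \<in> S0closure H \<Longrightarrow> ncsmult c f \<in> S0closure H"
| endo: "endo_k0 \<phi> \<Longrightarrow> f \<in> S0closure H \<Longrightarrow> \<phi> f \<in> S0closure H"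

text \<open>Elements: finitely supported k-valued functions on finite subsets S of indices,
  S standing for e_{i_1}...e_{i_n} with i_1 < ... < i_n ({||} is the unit 1).
  e_S e_T = 0 if S, T intersect, else (-1)^(number of inversions) e_{S \<union> T}.\<close>

type_synonym 'k grass = "nat fset \<Rightarrow>\<^sub>0 'k"

definition grass_sign :: "nat fset \<Rightarrow> nat fset \<Rightarrow> 'k::field" where
  "grass_sign S T = (-1) ^ card {(s, t). s |\<in>| S \<and> t |\<in>| T \<and> t < s}"

definition gmul :: "'k::field grass \<Rightarrow> 'k grass \<Rightarrow> 'k grass" where
  "gmul a b = (\<Sum>S\<in>Poly_Mapping.keys a. \<Sum>T\<in>Poly_Mapping.keys b.
      if S |\<inter>| T = {||}
      then Poly_Mapping.single (S |\<union>| T) (grass_sign S T * Poly_Mapping.lookup a S * Poly_Mapping.lookup b T)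
      else 0)"

definition gone :: "'k::field grass" where
  "gone = Poly_Mapping.single {||} 1"

definition gsmult :: "'k::field \<Rightarrow> 'k grass \<Rightarrow> 'k grass" where
  "gsmult c a = Poly_Mapping.map (\<lambda>x. c * x) a"

definition unital_hom_G :: "('k::field ncpoly \<Rightarrow> 'k grass) \<Rightarrow> bool" where
  "unital_hom_G h \<longleftrightarrow>
     h ncone = gone \<and>
     (\<forall>f g. h (f + g) = h f + h g) \<and>
     (\<forall>c f. h (ncsmult c f) = gsmult c (h f)) \<and>
     (\<forall>f g. h (ncmul f g) = gmul (h f) (h g))"

definition TG :: "'k::field ncpoly set" where
  "TG = {f. \<forall>h. unital_hom_G h \<longrightarrow> h f = 0}"

definition set_plus_nc :: "'k::field ncpoly set \<Rightarrow> 'k ncpoly set \<Rightarrow> 'k ncpoly set" where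
  "set_plus_nc A B = {a + b | a b. a \<in> A \<and> b \<in> B}"

end

theory Submission
  imports Defs
begin


instantiation list :: (type) monoid_add
begin
definition zero_list :: "'a list" where "zero_list = []"
definition plus_list :: "'a list \<Rightarrow> 'a list \<Rightarrow> 'a list" where "plus_list = (@)"
instance by standard (auto simp: zero_list_def plus_list_def)
end

lemma pm_expand: "(\<Sum>u\<in>Poly_Mapping.keys f. Poly_Mapping.single u (Poly_Mapping.lookup f u)) = f"
  by (rule poly_mapping_eqI) (simp add: lookup_sum lookup_single when_def in_keys_iff)

lemma ncmul_eq: "ncmul f g = f * (g :: 'k::field ncpoly)"
proof -
  have "f * g = (\<Sum>u\<in>Poly_Mapping.keys f. Poly_Mapping.single u (Poly_Mapping.lookup f u)) * (\<Sum>v\<in>Poly_Mapping.keys g. Poly_Mapping.single v (Poly_Mapping.lookup g v))"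
    by (simp only: pm_expand)
  also have "\<dots> = ncmul f g"
    unfolding ncmul_def sum_distrib_left sum_distrib_right mult_single
    by (subst sum.swap) (simp add: plus_list_def)
  finally show ?thesis by simp
qed


lemma ncone_eq: "(ncone :: 'k::field ncpoly) = 1"
  by (simp add: ncone_def one_poly_mapping.abs_eq zero_list_def[symmetric]) 

lemma ncsmult_eq: "ncsmult c f = Poly_Mapping.single [] c * (f :: 'k::field ncpoly)"
  unfolding ncsmult_def zero_list_def[symmetric] by (rule mult_map_scale_conv_mult)

lemma ncpow_eq: "ncpow f n = (f :: 'k::field ncpoly) ^ n"
  by (induct n) (simp_all add: ncone_eq ncmul_eq power_commutes)

lemma nccomm_eq: "nccomm a b = a * b - b * (a :: 'k::field ncpoly)"
  by (simp add: nccomm_def ncmul_eq)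

lemma kappa_eq: "kappa p u v = (u * v - v * u) * u ^ (p - 1) * (v :: 'k::field ncpoly) ^ (p - 1)"
  by (simp add: kappa_def ncmul_eq ncpow_eq nccomm_eq)

definition ren :: "(nat \<Rightarrow> nat) \<Rightarrow> 'k::field ncpoly \<Rightarrow> 'k ncpoly" where
  "ren r f = (\<Sum>u\<in>Poly_Mapping.keys f. Poly_Mapping.single (map r u) (Poly_Mapping.lookup f u))"

lemma ren_superset:
  assumes "finite A" "Poly_Mapping.keys f \<subseteq> A"
  shows "ren r f = (\<Sum>u\<in>A. Poly_Mapping.single (map r u) (Poly_Mapping.lookup f u))"
  unfolding ren_def
  by (rule sum.mono_neutral_left) (use assms in \<open>auto simp: in_keys_iff\<close>)

lemma ren_add: "ren r (f + g) = ren r f + ren r g"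
proof -
  let ?A = "Poly_Mapping.keys f \<union> Poly_Mapping.keys g"
  have "ren r (f + g) = (\<Sum>u\<in>?A. Poly_Mapping.single (map r u) (Poly_Mapping.lookup (f+g) u))"
    by (rule ren_superset) (auto simp: keys_add)
  also have "\<dots> = (\<Sum>u\<in>?A. Poly_Mapping.single (map r u) (Poly_Mapping.lookup f u))
      + (\<Sum>u\<in>?A. Poly_Mapping.single (map r u) (Poly_Mapping.lookup g u))"
    by (simp add: lookup_add single_add sum.distrib)
  also have "\<dots> = ren r f + ren r g"
    by (subst (1 2) ren_superset[where A = ?A]) auto
  finally show ?thesis .
qed

lemma ren_zero: "ren r 0 = 0"
  by (simp add: ren_def)

lemma ren_sum: "finite A \<Longrightarrow> ren r (\<Sum>x\<in>A. F x) = (\<Sum>x\<in>A. ren r (F x))"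
  by (induct A rule: finite_induct) (simp_all add: ren_zero ren_add)

lemma ren_single: "ren r (Poly_Mapping.single u a) = Poly_Mapping.single (map r u) a"
  by (cases "a = 0") (simp_all add: ren_def)

lemma ren_mult: "ren r (f * g) = ren r f * ren r (g :: 'k::field ncpoly)"
proof -
  have "f * g = (\<Sum>u\<in>Poly_Mapping.keys f. \<Sum>v\<in>Poly_Mapping.keys g. Poly_Mapping.single (u @ v) (Poly_Mapping.lookup f u * Poly_Mapping.lookup g v))"
    using ncmul_eq[of f g] by (simp add: ncmul_def)
  then have "ren r (f * g) = (\<Sum>u\<in>Poly_Mapping.keys f. \<Sum>v\<in>Poly_Mapping.keys g. Poly_Mapping.single (map r u) (Poly_Mapping.lookup f u) * Poly_Mapping.single (map r v) (Poly_Mapping.lookup g v))"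
    by (simp add: ren_sum ren_single mult_single plus_list_def)
  also have "\<dots> = ren r f * ren r g"
    by (simp add: ren_def sum_distrib_left sum_distrib_right) (subst sum.swap, rule refl)
  finally show ?thesis .
qed

lemma ren_one: "ren r (1 :: 'k::field ncpoly) = 1"
  using ren_single[of r "[]" "1::'k"] by (simp add: ncone_def[symmetric] ncone_eq)

lemma ren_var: "ren r (ncvar i) = ncvar (r i)"
  by (simp add: ncvar_def ren_single)

lemma ren_minus: "ren r (f - g) = ren r f - ren r g"
  by (metis add_diff_cancel diff_add_cancel ren_add)

lemma ren_pow: "ren r (f ^ n) = ren r f ^ n"
  by (induct n) (simp_all add: ren_one ren_mult)

lemma ren_k0: "f \<in> k0 \<Longrightarrow> ren r f \<in> k0"
proof -
  assume "f \<in> k0"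
  have "Poly_Mapping.lookup (ren r f) [] = (\<Sum>u\<in>Poly_Mapping.keys f. (Poly_Mapping.lookup f u when map r u = []))"
    by (simp add: ren_def lookup_sum lookup_single)
  also have "\<dots> = (\<Sum>u\<in>Poly_Mapping.keys f. (Poly_Mapping.lookup f u when u = []))"
    by simp
  also have "\<dots> = 0"
    using \<open>f \<in> k0\<close> by (simp add: when_def k0_def in_keys_iff)
  finally show ?thesis by (simp add: k0_def)
qed

lemma endo_ren: "endo_k0 (ren r :: 'k::field ncpoly \<Rightarrow> _)"
  unfolding endo_k0_def
  by (simp add: ren_k0 ren_add ncsmult_eq ncmul_eq ren_mult ren_single)



definition ginv :: "nat fset \<Rightarrow> nat fset \<Rightarrow> nat" where
  "ginv S T = card {(s, t). s |\<in>| S \<and> t |\<in>| T \<and> t < s}"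

lemma grass_sign_ginv: "grass_sign S T = (-1) ^ ginv S T"
  by (simp add: grass_sign_def ginv_def)

lemma ginv_fin: "finite {(s, t). s |\<in>| S \<and> t |\<in>| T \<and> (P s t)}"
  by (rule finite_subset[of _ "fset S \<times> fset T"]) auto

lemma ginv_un_left:
  assumes "S |\<inter>| T = {||}"
  shows "ginv (S |\<union>| T) U = ginv S U + ginv T U"
proof -
  have "{(s, t). s |\<in>| S |\<union>| T \<and> t |\<in>| U \<and> t < s} =
        {(s, t). s |\<in>| S \<and> t |\<in>| U \<and> t < s} \<union> {(s, t). s |\<in>| T \<and> t |\<in>| U \<and> t < s}"
    by auto
  moreover have "{(s, t). s |\<in>| S \<and> t |\<in>| U \<and> t < s} \<inter> {(s, t). s |\<in>| T \<and> t |\<in>| U \<and> t < s} = {}"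
    using assms by (auto simp: fset_eq_iff)
  ultimately show ?thesis
    unfolding ginv_def by (simp add: card_Un_disjoint ginv_fin)
qed

lemma ginv_un_right:
  assumes "T |\<inter>| U = {||}"
  shows "ginv S (T |\<union>| U) = ginv S T + ginv S U"
proof -
  have "{(s, t). s |\<in>| S \<and> t |\<in>| T |\<union>| U \<and> t < s} =
        {(s, t). s |\<in>| S \<and> t |\<in>| T \<and> t < s} \<union> {(s, t). s |\<in>| S \<and> t |\<in>| U \<and> t < s}"
    by auto
  moreover have "{(s, t). s |\<in>| S \<and> t |\<in>| T \<and> t < s} \<inter> {(s, t). s |\<in>| S \<and> t |\<in>| U \<and> t < s} = {}"
    using assms by (auto simp: fset_eq_iff)
  ultimately show ?thesis
    unfolding ginv_def by (simp add: card_Un_disjoint ginv_fin)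
qed

lemma ginv_swap:
  assumes "S |\<inter>| T = {||}"
  shows "ginv S T + ginv T S = fcard S * fcard T"
proof -
  have e: "{(s, t). s |\<in>| T \<and> t |\<in>| S \<and> t < s} = prod.swap ` {(s, t). s |\<in>| S \<and> t |\<in>| T \<and> s < t}"
    by (auto simp: image_def)
  have "ginv T S = card {(s, t). s |\<in>| S \<and> t |\<in>| T \<and> s < t}"
    unfolding ginv_def e by (rule card_image) (simp add: inj_on_def)
  moreover have "fset S \<times> fset T = {(s, t). s |\<in>| S \<and> t |\<in>| T \<and> t < s} \<union> {(s, t). s |\<in>| S \<and> t |\<in>| T \<and> s < t}"
    using assms by (auto simp: fset_eq_iff) (metis linorder_neqE_nat)
  moreover have "{(s, t). s |\<in>| S \<and> t |\<in>| T \<and> t < s} \<inter> {(s, t). s |\<in>| S \<and> t |\<in>| T \<and> s < t} = {}"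
    by auto
  ultimately have "fcard S * fcard T = ginv S T + ginv T S"
    by (simp add: fcard.rep_eq card_cartesian_product[symmetric] card_Un_disjoint ginv_fin ginv_def del: card_cartesian_product)
  then show ?thesis by simp
qed

lemma sign_assoc:
  assumes "S |\<inter>| T = {||}" "T |\<inter>| U = {||}" "S |\<inter>| U = {||}"
  shows "(grass_sign S T :: 'k::field) * grass_sign (S |\<union>| T) U = grass_sign T U * grass_sign S (T |\<union>| U)"
  using assms by (simp add: grass_sign_ginv ginv_un_left ginv_un_right power_add)

lemma sign_comm:
  assumes "S |\<inter>| T = {||}"
  shows "(grass_sign S T :: 'k::field) = (-1) ^ (fcard S * fcard T) * grass_sign T S"
proof -
  have "(-1::'k) ^ (fcard S * fcard T) * grass_sign T S = (-1) ^ (ginv S T + ginv T S) * (-1) ^ ginv T S"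
    using ginv_swap[OF assms] by (simp add: grass_sign_ginv)
  also have "\<dots> = (-1) ^ ginv S T * ((-1) ^ ginv T S * (-1) ^ ginv T S)"
    by (simp add: power_add mult_ac)
  also have "(-1::'k) ^ ginv T S * (-1) ^ ginv T S = 1"
    by (simp add: power_add[symmetric] mult_2[symmetric])
  finally show ?thesis by (simp add: grass_sign_ginv)
qed


definition gm :: "nat fset \<Rightarrow> nat fset \<Rightarrow> 'k::field \<Rightarrow> 'k \<Rightarrow> 'k grass" where
  "gm S T x y = (if S |\<inter>| T = {||} then Poly_Mapping.single (S |\<union>| T) (grass_sign S T * x * y) else 0)"

lemma gmul_gm: "gmul a b = (\<Sum>S\<in>Poly_Mapping.keys a. \<Sum>T\<in>Poly_Mapping.keys b. gm S T (Poly_Mapping.lookup a S) (Poly_Mapping.lookup b T))"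
  unfolding gmul_def gm_def by (simp add: mult.assoc)

lemma gm_zero1 [simp]: "gm S T 0 y = 0" and gm_zero2 [simp]: "gm S T x 0 = 0"
  by (simp_all add: gm_def)

lemma gm_add1: "gm S T (x + x') y = gm S T x y + gm S T x' y"
  and gm_add2: "gm S T x (y + y') = gm S T x y + gm S T x y'"
  by (simp_all add: gm_def algebra_simps single_add)

lemma gmul_superset:
  assumes "finite A" "Poly_Mapping.keys a \<subseteq> A" "finite B" "Poly_Mapping.keys b \<subseteq> B"
  shows "gmul a b = (\<Sum>S\<in>A. \<Sum>T\<in>B. gm S T (Poly_Mapping.lookup a S) (Poly_Mapping.lookup b T))"
proof -
  have "gmul a b = (\<Sum>S\<in>A. \<Sum>T\<in>Poly_Mapping.keys b. gm S T (Poly_Mapping.lookup a S) (Poly_Mapping.lookup b T))"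
    unfolding gmul_gm by (rule sum.mono_neutral_left) (use assms in \<open>auto simp: in_keys_iff\<close>)
  also have "\<dots> = (\<Sum>S\<in>A. \<Sum>T\<in>B. gm S T (Poly_Mapping.lookup a S) (Poly_Mapping.lookup b T))"
    by (rule sum.cong[OF refl], rule sum.mono_neutral_left) (use assms in \<open>auto simp: in_keys_iff\<close>)
  finally show ?thesis .
qed

lemma gmul_add_left: "gmul (a + a') b = gmul a b + gmul a' (b :: 'k::field grass)"
proof -
  let ?A = "Poly_Mapping.keys a \<union> Poly_Mapping.keys a'" and ?B = "Poly_Mapping.keys b"
  have "gmul (a + a') b = (\<Sum>S\<in>?A. \<Sum>T\<in>?B. gm S T (Poly_Mapping.lookup (a + a') S) (Poly_Mapping.lookup b T))"
    by (rule gmul_superset) (auto simp: keys_add)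
  also have "\<dots> = (\<Sum>S\<in>?A. \<Sum>T\<in>?B. gm S T (Poly_Mapping.lookup a S) (Poly_Mapping.lookup b T))
     + (\<Sum>S\<in>?A. \<Sum>T\<in>?B. gm S T (Poly_Mapping.lookup a' S) (Poly_Mapping.lookup b T))"
    by (simp add: lookup_add gm_add1 sum.distrib)
  also have "\<dots> = gmul a b + gmul a' b"
    by (subst (1 2) gmul_superset[where A = ?A and B = ?B]) auto
  finally show ?thesis .
qed

lemma gmul_add_right: "gmul a (b + b') = gmul a b + gmul a (b' :: 'k::field grass)"
proof -
  let ?A = "Poly_Mapping.keys a" and ?B = "Poly_Mapping.keys b \<union> Poly_Mapping.keys b'"
  have "gmul a (b + b') = (\<Sum>S\<in>?A. \<Sum>T\<in>?B. gm S T (Poly_Mapping.lookup a S) (Poly_Mapping.lookup (b + b') T))"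
    by (rule gmul_superset) (auto simp: keys_add)
  also have "\<dots> = (\<Sum>S\<in>?A. \<Sum>T\<in>?B. gm S T (Poly_Mapping.lookup a S) (Poly_Mapping.lookup b T))
     + (\<Sum>S\<in>?A. \<Sum>T\<in>?B. gm S T (Poly_Mapping.lookup a S) (Poly_Mapping.lookup b' T))"
    by (simp add: lookup_add gm_add2 sum.distrib)
  also have "\<dots> = gmul a b + gmul a b'"
    by (subst (1 2) gmul_superset[where A = ?A and B = ?B]) auto
  finally show ?thesis .
qed

lemma gmul_zero_left [simp]: "gmul 0 b = 0" and gmul_zero_right [simp]: "gmul a 0 = 0"
  by (simp_all add: gmul_def)

lemma gmul_sum_left: "finite I \<Longrightarrow> gmul (\<Sum>i\<in>I. F i) b = (\<Sum>i\<in>I. gmul (F i) b)"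
  by (induct I rule: finite_induct) (simp_all add: gmul_add_left)

lemma gmul_sum_right: "finite I \<Longrightarrow> gmul a (\<Sum>i\<in>I. F i) = (\<Sum>i\<in>I. gmul a (F i))"
  by (induct I rule: finite_induct) (simp_all add: gmul_add_right)

lemma gmul_single: "gmul (Poly_Mapping.single S x) (Poly_Mapping.single T y) = gm S T x y"
  by (cases "x = 0"; cases "y = 0") (simp_all add: gmul_gm)

lemma gm_as_gmul: "gm S T x y = gmul (Poly_Mapping.single S x) (Poly_Mapping.single T y)"
  by (simp add: gmul_single)

lemma gm_assoc:
  fixes x :: "'k::field"
  shows "gmul (gm S T x y) (Poly_Mapping.single U z) = gmul (Poly_Mapping.single S x) (gm T U y z)"
proof (cases "S |\<inter>| T = {||} \<and> T |\<inter>| U = {||} \<and> S |\<inter>| U = {||}")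
  case True
  then have d1: "S |\<inter>| T = {||}" and d2: "T |\<inter>| U = {||}" and d3: "S |\<inter>| U = {||}" by auto
  have d4: "(S |\<union>| T) |\<inter>| U = {||}" using d2 d3 by (simp add: finter_funion_distrib2)
  have d5: "S |\<inter>| (T |\<union>| U) = {||}" using d1 d3 by (simp add: finter_funion_distrib)
  have "gmul (gm S T x y) (Poly_Mapping.single U z) = Poly_Mapping.single (S |\<union>| T |\<union>| U) (grass_sign (S |\<union>| T) U * (grass_sign S T * x * y) * z)"
    using d1 d4 by (simp add: gm_def gmul_single)
  also have "\<dots> = Poly_Mapping.single (S |\<union>| (T |\<union>| U)) (grass_sign S (T |\<union>| U) * x * (grass_sign T U * y * z))"
  proof -
    have "grass_sign (S |\<union>| T) U * (grass_sign S T * x * y) * z = (grass_sign S T * grass_sign (S |\<union>| T) U) * (x * y * z)"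
      by (simp only: ac_simps)
    also have "\<dots> = (grass_sign T U * grass_sign S (T |\<union>| U)) * (x * y * z)"
      using sign_assoc[OF d1 d2 d3] by (rule arg_cong[where f="\<lambda>v. v * (x * y * z)"])
    also have "\<dots> = grass_sign S (T |\<union>| U) * x * (grass_sign T U * y * z)"
      by (simp only: ac_simps)
    finally have e: "grass_sign (S |\<union>| T) U * (grass_sign S T * x * y) * z = grass_sign S (T |\<union>| U) * x * (grass_sign T U * y * z)" .
    show ?thesis by (simp only: e funion_assoc)
  qed
  also have "\<dots> = gmul (Poly_Mapping.single S x) (gm T U y z)"
    using d2 d5 by (simp add: gm_def gmul_single)
  finally show ?thesis .
next
  case False
  then consider "S |\<inter>| T \<noteq> {||}" | "S |\<inter>| T = {||}" "T |\<inter>| U \<noteq> {||}" | "S |\<inter>| T = {||}" "T |\<inter>| U = {||}" "S |\<inter>| U \<noteq> {||}" by blast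
  then show ?thesis
  proof cases
    case 1
    then show ?thesis
      by (cases "T |\<inter>| U = {||}") (simp_all add: gm_def gmul_single, auto simp: fset_eq_iff)
  next
    case 2
    then show ?thesis
      by (simp add: gm_def gmul_single, auto simp: fset_eq_iff)
  next
    case 3
    then show ?thesis
      by (simp add: gm_def gmul_single, auto simp: fset_eq_iff)
  qed
qed

lemma gmul_assoc: "gmul (gmul a b) c = gmul a (gmul b (c :: 'k::field grass))"
proof -
  have "gmul (gmul (\<Sum>S\<in>Poly_Mapping.keys a. Poly_Mapping.single S (Poly_Mapping.lookup a S))
                   (\<Sum>S\<in>Poly_Mapping.keys b. Poly_Mapping.single S (Poly_Mapping.lookup b S)))
              (\<Sum>S\<in>Poly_Mapping.keys c. Poly_Mapping.single S (Poly_Mapping.lookup c S))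
      = gmul (\<Sum>S\<in>Poly_Mapping.keys a. Poly_Mapping.single S (Poly_Mapping.lookup a S))
              (gmul (\<Sum>S\<in>Poly_Mapping.keys b. Poly_Mapping.single S (Poly_Mapping.lookup b S))
                   (\<Sum>S\<in>Poly_Mapping.keys c. Poly_Mapping.single S (Poly_Mapping.lookup c S)))"
    by (simp add: gmul_sum_left gmul_sum_right gmul_single gm_assoc)
  then show ?thesis by (simp only: pm_expand)
qed


lemma ginv_empty1 [simp]: "ginv {||} T = 0" and ginv_empty2 [simp]: "ginv S {||} = 0"
  by (simp_all add: ginv_def)

lemma gmul_one_left: "gmul gone a = (a :: 'k::field grass)"
proof -
  have "gmul gone a = (\<Sum>T\<in>Poly_Mapping.keys a. gm {||} T 1 (Poly_Mapping.lookup a T))"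
    by (simp add: gmul_gm gone_def)
  also have "\<dots> = a"
    by (simp add: gm_def grass_sign_ginv pm_expand)
  finally show ?thesis .
qed

lemma gmul_one_right: "gmul a gone = (a :: 'k::field grass)"
proof -
  have "gmul a gone = (\<Sum>T\<in>Poly_Mapping.keys a. gm T {||} (Poly_Mapping.lookup a T) 1)"
    by (simp add: gmul_gm gone_def)
  also have "\<dots> = a"
    by (simp add: gm_def grass_sign_ginv pm_expand)
  finally show ?thesis .
qed

typedef (overloaded) ('k::field) gr = "UNIV :: 'k grass set" by simp

setup_lifting type_definition_gr

instantiation gr :: (field) ring_1
begin
lift_definition zero_gr :: "'a gr" is 0 .
lift_definition one_gr :: "'a gr" is gone .
lift_definition plus_gr :: "'a gr \<Rightarrow> 'a gr \<Rightarrow> 'a gr" is "(+)" .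
lift_definition minus_gr :: "'a gr \<Rightarrow> 'a gr \<Rightarrow> 'a gr" is "(-)" .
lift_definition uminus_gr :: "'a gr \<Rightarrow> 'a gr" is uminus .
lift_definition times_gr :: "'a gr \<Rightarrow> 'a gr \<Rightarrow> 'a gr" is gmul .
instance
proof
  fix a b c :: "'a gr"
  show "a * b * c = a * (b * c)" by transfer (rule gmul_assoc)
  show "1 * a = a" by transfer (rule gmul_one_left)
  show "a * 1 = a" by transfer (rule gmul_one_right)
  show "(a + b) * c = a * c + b * c" by transfer (rule gmul_add_left)
  show "a * (b + c) = a * b + a * c" by transfer (rule gmul_add_right)
  show "a + b + c = a + (b + c)" by transfer (rule add.assoc)
  show "a + b = b + a" by transfer (rule add.commute)
  show "0 + a = a" by transfer simp
  show "- a + a = 0" by transfer simp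
  show "a - b = a + - b" by transfer simp
  show "(0::'a gr) \<noteq> 1" by transfer (metis gone_def lookup_single_eq lookup_zero zero_neq_one)
qed
end


definition mono :: "nat fset \<Rightarrow> 'k::field \<Rightarrow> 'k gr" where
  "mono S x = Abs_gr (Poly_Mapping.single S x)"

lemma Rep_gr_sum: "Rep_gr (\<Sum>i\<in>I. F i) = (\<Sum>i\<in>I. Rep_gr (F i))"
  by (induct I rule: infinite_finite_induct) (simp_all add: zero_gr.rep_eq plus_gr.rep_eq)

lemma gr_expand: "a = (\<Sum>S\<in>Poly_Mapping.keys (Rep_gr a). mono S (Poly_Mapping.lookup (Rep_gr a) S))"
proof -
  have "Rep_gr (\<Sum>S\<in>Poly_Mapping.keys (Rep_gr a). mono S (Poly_Mapping.lookup (Rep_gr a) S)) = Rep_gr a"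
    by (simp add: Rep_gr_sum mono_def Abs_gr_inverse pm_expand)
  then show ?thesis by (simp add: Rep_gr_inject)
qed

lemma mono_mult: "mono S x * mono T y = (if S |\<inter>| T = {||} then mono (S |\<union>| T) (grass_sign S T * x * y) else 0)"
  by (simp add: mono_def times_gr_def Abs_gr_inverse gmul_single gm_def zero_gr_def)

lemma mono_neg: "mono S (- z) = - (mono S z :: 'k::field gr)"
proof -
  have "Rep_gr (mono S (- z)) = Rep_gr (- mono S z)"
    by (simp add: mono_def uminus_gr.rep_eq Abs_gr_inverse single_uminus)
  then show ?thesis by (simp only: Rep_gr_inject)
qed

lemma mono_comm_even:
  assumes "even (fcard S * fcard T)"
  shows "mono S x * mono T y = mono T y * (mono S x :: 'k::field gr)"
proof (cases "S |\<inter>| T = {||}")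
  case True
  then have T2: "T |\<inter>| S = {||}" by (simp add: finter_commute)
  have "(grass_sign S T :: 'k) = grass_sign T S"
    using sign_comm[OF True, where 'k='k] assms by simp
  then have e: "grass_sign S T * x * y = grass_sign T S * y * (x::'k)" by (simp add: ac_simps)
  show ?thesis
    unfolding mono_mult by (simp only: True T2 if_True e funion_commute[of T S] simp_thms)
next
  case False
  then have "T |\<inter>| S \<noteq> {||}" by (simp add: finter_commute)
  with False show ?thesis by (simp add: mono_mult)
qed

lemma mono_comm_odd:
  assumes "odd (fcard S * fcard T)"
  shows "mono S x * mono T y = - (mono T y * (mono S x :: 'k::field gr))"
proof (cases "S |\<inter>| T = {||}")
  case True
  then have T2: "T |\<inter>| S = {||}" by (simp add: finter_commute)
  have "(grass_sign S T :: 'k) = - grass_sign T S"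
    using sign_comm[OF True, where 'k='k] assms by simp
  then have e: "grass_sign S T * x * y = - (grass_sign T S * y * (x::'k))" by (simp add: ac_simps)
  show ?thesis
    unfolding mono_mult by (simp only: True T2 if_True e funion_commute[of T S] mono_neg simp_thms)
next
  case False
  then have "T |\<inter>| S \<noteq> {||}" by (simp add: finter_commute)
  with False show ?thesis by (simp add: mono_mult)
qed

definition gev :: "'k::field gr \<Rightarrow> 'k gr" where
  "gev a = (\<Sum>S\<in>Poly_Mapping.keys (Rep_gr a). if even (fcard S) then mono S (Poly_Mapping.lookup (Rep_gr a) S) else 0)"

definition god :: "'k::field gr \<Rightarrow> 'k gr" where
  "god a = (\<Sum>S\<in>Poly_Mapping.keys (Rep_gr a). if odd (fcard S) then mono S (Poly_Mapping.lookup (Rep_gr a) S) else 0)"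

lemma gev_god: "a = gev a + god a"
proof -
  have "gev a + god a = (\<Sum>S\<in>Poly_Mapping.keys (Rep_gr a). mono S (Poly_Mapping.lookup (Rep_gr a) S))"
    unfolding gev_def god_def sum.distrib[symmetric] by (rule sum.cong) auto
  then show ?thesis using gr_expand[of a] by simp
qed

lemma Rep_of_nat: "Rep_gr (of_nat n :: 'k::field gr) = Poly_Mapping.single {||} (of_nat n)"
proof (induct n)
  case 0
  then show ?case by (simp add: zero_gr.rep_eq)
next
  case (Suc n)
  have "Rep_gr (of_nat (Suc n) :: 'k gr) = Rep_gr (1 + of_nat n :: 'k gr)" by (simp only: of_nat_Suc)
  also have "\<dots> = gone + Poly_Mapping.single {||} (of_nat n)" by (simp only: plus_gr.rep_eq one_gr.rep_eq Suc)
  also have "\<dots> = Poly_Mapping.single {||} (1 + of_nat n)" by (simp only: gone_def single_add)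
  finally show ?case by simp
qed

lemma gr_of_nat_zero: "of_nat n = (0 :: 'k::field) \<Longrightarrow> of_nat n = (0 :: 'k gr)"
proof -
  assume "of_nat n = (0 :: 'k)"
  then have "Rep_gr (of_nat n :: 'k gr) = Rep_gr 0" by (simp only: Rep_of_nat zero_gr.rep_eq single_zero)
  then show ?thesis by (simp only: Rep_gr_inject)
qed

lemma gr_double_zero:
  assumes "(2::'k::field) \<noteq> 0" "c + c = (0 :: 'k gr)"
  shows "c = 0"
proof -
  have "Poly_Mapping.lookup (Rep_gr c) S = 0" for S
  proof -
    have "Rep_gr c + Rep_gr c = 0" using assms(2) by (metis plus_gr.rep_eq zero_gr.rep_eq)
    then have "Poly_Mapping.lookup (Rep_gr c) S + Poly_Mapping.lookup (Rep_gr c) S = 0"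
      by (metis lookup_add lookup_zero)
    then have "2 * Poly_Mapping.lookup (Rep_gr c) S = 0" by (simp only: mult_2)
    with assms(1) show ?thesis by simp
  qed
  then have "Rep_gr c = 0" by (intro poly_mapping_eqI) simp
  then have "Rep_gr c = Rep_gr 0" by (simp only: zero_gr.rep_eq)
  then show ?thesis by (simp only: Rep_gr_inject)
qed

lemma sum_mult_sum: "(\<Sum>i\<in>I. f i) * (\<Sum>j\<in>J. g j) = (\<Sum>i\<in>I. \<Sum>j\<in>J. f i * (g j :: 'a::ring))"
  unfolding sum_distrib_right by (simp only: sum_distrib_left)

lemma gev_central: "gev a * z = z * gev (a :: 'k::field gr)"
proof -
  let ?K = "Poly_Mapping.keys (Rep_gr z)" and ?z = "Poly_Mapping.lookup (Rep_gr z)"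
  let ?A = "Poly_Mapping.keys (Rep_gr a)" and ?a = "Poly_Mapping.lookup (Rep_gr a)"
  let ?f = "\<lambda>S. if even (fcard S) then mono S (?a S) else 0"
  have "gev a * z = (\<Sum>S\<in>?A. ?f S) * (\<Sum>T\<in>?K. mono T (?z T))"
    unfolding gev_def by (subst gr_expand[of z]) (rule refl)
  also have "\<dots> = (\<Sum>S\<in>?A. \<Sum>T\<in>?K. ?f S * mono T (?z T))" by (rule sum_mult_sum)
  also have "\<dots> = (\<Sum>S\<in>?A. \<Sum>T\<in>?K. mono T (?z T) * ?f S)"
  proof (intro sum.cong refl)
    fix S T
    show "?f S * mono T (?z T) = mono T (?z T) * ?f S"
      by (cases "even (fcard S)") (simp_all add: mono_comm_even)
  qed
  also have "\<dots> = (\<Sum>T\<in>?K. mono T (?z T)) * (\<Sum>S\<in>?A. ?f S)"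
    by (subst sum_mult_sum, subst sum.swap) (rule refl)
  also have "\<dots> = z * gev a"
    unfolding gev_def by (subst (2) gr_expand[of z]) (rule refl)
  finally show ?thesis .
qed

lemma god_anti: "god a * god b = - (god b * god (a :: 'k::field gr))"
proof -
  let ?B = "Poly_Mapping.keys (Rep_gr b)" and ?b = "Poly_Mapping.lookup (Rep_gr b)"
  let ?A = "Poly_Mapping.keys (Rep_gr a)" and ?a = "Poly_Mapping.lookup (Rep_gr a)"
  let ?f = "\<lambda>S. if odd (fcard S) then mono S (?a S) else 0"
  let ?g = "\<lambda>S. if odd (fcard S) then mono S (?b S) else 0"
  have "god a * god b = (\<Sum>S\<in>?A. \<Sum>T\<in>?B. ?f S * ?g T)"
    unfolding god_def by (rule sum_mult_sum)
  also have "\<dots> = (\<Sum>S\<in>?A. \<Sum>T\<in>?B. - (?g T * ?f S))"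
  proof (intro sum.cong refl)
    fix S T
    show "?f S * ?g T = - (?g T * ?f S)"
      by (cases "odd (fcard S)"; cases "odd (fcard T)") (simp_all add: mono_comm_odd[of S T])
  qed
  also have "\<dots> = - (\<Sum>T\<in>?B. \<Sum>S\<in>?A. ?g T * ?f S)"
    by (simp only: sum_negf, subst sum.swap) (rule refl)
  also have "\<dots> = - (god b * god a)"
    unfolding god_def by (subst sum_mult_sum) (rule refl)
  finally show ?thesis .
qed



definition central :: "'a::ring_1 \<Rightarrow> bool" where
  "central c \<longleftrightarrow> (\<forall>z. c * z = z * c)"

lemma centralD: "central c \<Longrightarrow> c * z = z * c"
  by (simp add: central_def)

lemma centralD2: "central c \<Longrightarrow> z * (c * w) = c * (z * w)"
  by (metis central_def mult.assoc)

lemma central_mult: "central a \<Longrightarrow> central b \<Longrightarrow> central (a * b)"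
  unfolding central_def by (metis mult.assoc)

lemma central_add: "central a \<Longrightarrow> central b \<Longrightarrow> central (a + b)"
  unfolding central_def by (simp add: algebra_simps)

lemma central_one: "central 1" and central_zero: "central 0"
  by (simp_all add: central_def)

lemma central_pow: "central a \<Longrightarrow> central (a ^ n)"
  by (induct n) (simp_all add: central_one central_mult)

lemma central_of_nat: "central (of_nat n)"
  by (simp add: central_def mult_of_nat_commute)

lemma pow_central_sum:
  assumes "central N"
  shows "\<exists>Q. (P + N) ^ n = P ^ n + N * Q"
proof (induct n)
  case 0
  then show ?case by (intro exI[of _ 0]) simp
next
  case (Suc n)
  then obtain Q where Q: "(P + N) ^ n = P ^ n + N * Q" by blast
  have "(P + N) ^ Suc n = (P ^ n + N * Q) * (P + N)" by (simp only: power_Suc2 Q)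
  also have "\<dots> = P ^ n * P + N * (P ^ n + Q * P + Q * N)"
    using centralD[OF assms, of "P ^ n"]
    by (simp add: algebra_simps del: power_Suc)
  finally show ?case by (metis power_Suc2)
qed

lemma pow_sq0_sum:
  assumes "central A" "B * B = 0"
  shows "\<exists>Q. central Q \<and> (A + B) ^ n = A ^ n + Q * B"
proof (induct n)
  case 0
  then show ?case by (intro exI[of _ 0]) (simp add: central_zero)
next
  case (Suc n)
  then obtain Q where Q: "central Q" "(A + B) ^ n = A ^ n + Q * B" by blast
  have "(A + B) ^ Suc n = (A ^ n + Q * B) * (A + B)" by (simp only: power_Suc2 Q)
  also have "\<dots> = A ^ n * A + (A ^ n + Q * A) * B"
  proof -
    have "Q * B * A = Q * A * B" using centralD[OF assms(1), of B] by (simp add: mult.assoc)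
    moreover have "Q * B * B = 0" using assms(2) by (simp add: mult.assoc)
    ultimately show ?thesis by (simp add: algebra_simps del: power_Suc)
  qed
  finally have "(A + B) ^ Suc n = A ^ Suc n + (A ^ n + Q * A) * B" by (simp only: power_Suc2)
  then show ?case
    using Q(1) assms(1) by (intro exI[of _ "A ^ n + Q * A"]) (simp add: central_add central_mult central_pow)
qed

definition kr :: "nat \<Rightarrow> 'a::ring_1 \<Rightarrow> 'a \<Rightarrow> 'a" where
  "kr n u v = (u * v - v * u) * u ^ n * v ^ n"

lemma kr_formula:
  assumes cA: "central A" and cC: "central C" and BB: "B * B = 0" and DD: "D * D = 0"
    and BD: "B * D = - (D * B)"
  shows "kr n (A + B) (C + D) = A ^ n * (C ^ n * (B * D + B * D))"
proof -
  let ?X = "B * D"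
  obtain Q where cQ: "central Q" and Q: "(A + B) ^ n = A ^ n + Q * B"
    using pow_sq0_sum[OF cA BB] by blast
  obtain R where cR: "central R" and R: "(C + D) ^ n = C ^ n + R * D"
    using pow_sq0_sum[OF cC DD] by blast
  have DB: "D * B = - ?X" using BD by simp
  have c1: "(A + B) * (C + D) - (C + D) * (A + B) = ?X + ?X"
  proof -
    have "C * A = A * C" "C * B = B * C" "D * A = A * D"
      using centralD[OF cA, of C] centralD[OF cC, of B] centralD[OF cA, of D] by simp_all
    then show ?thesis using DB by (simp add: algebra_simps)
  qed
  have x1: "?X * (Q * B) = 0"
  proof -
    have "?X * (Q * B) = B * (D * (Q * B))" by (simp add: mult.assoc)
    also have "\<dots> = B * (Q * (D * B))" by (simp add: centralD2[OF cQ])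
    also have "\<dots> = - (Q * ((B * B) * D))" using DB by (simp add: centralD2[OF cQ] mult.assoc)
    finally show ?thesis using BB by simp
  qed
  have x2: "?X * (R * D) = 0"
  proof -
    have "?X * (R * D) = B * (R * (D * D))" by (simp add: centralD2[OF cR] mult.assoc)
    then show ?thesis using DD by simp
  qed
  have e1: "(?X + ?X) * (A ^ n + Q * B) = A ^ n * (?X + ?X)"
  proof -
    have "(?X + ?X) * (A ^ n + Q * B) = (?X + ?X) * A ^ n + (?X * (Q * B) + ?X * (Q * B))"
      by (simp only: distrib_left distrib_right)
    also have "\<dots> = (?X + ?X) * A ^ n" using x1 by simp
    also have "\<dots> = A ^ n * (?X + ?X)" using centralD[OF central_pow[OF cA, of n], of "?X + ?X"] by (simp only:)
    finally show ?thesis .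
  qed
  have e2: "A ^ n * (?X + ?X) * (C ^ n + R * D) = A ^ n * (C ^ n * (?X + ?X))"
  proof -
    have "A ^ n * (?X + ?X) * (C ^ n + R * D) = A ^ n * ((?X + ?X) * C ^ n + (?X * (R * D) + ?X * (R * D)))"
      by (simp only: distrib_left distrib_right mult.assoc)
    also have "\<dots> = A ^ n * ((?X + ?X) * C ^ n)" using x2 by simp
    also have "\<dots> = A ^ n * (C ^ n * (?X + ?X))"
      using centralD[OF central_pow[OF cC, of n], of "?X + ?X"] by (simp only:)
    finally show ?thesis .
  qed
  have "kr n (A + B) (C + D) = (?X + ?X) * (A ^ n + Q * B) * (C ^ n + R * D)"
    unfolding kr_def c1 Q R ..
  then show ?thesis by (simp only: e1 e2)
qed

lemma pow_sq0_exact: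
  assumes cA: "central A" and BB: "B * B = 0"
  shows "(A + B) ^ Suc m = A ^ Suc m + of_nat (Suc m) * (A ^ m * B)"
proof (induct m)
  case 0
  then show ?case by simp
next
  case (Suc m)
  have "(A + B) ^ Suc (Suc m) = (A ^ Suc m + of_nat (Suc m) * (A ^ m * B)) * (A + B)"
    by (simp only: power_Suc2[of _ "Suc m"] Suc)
  also have "\<dots> = A ^ Suc m * A + A ^ Suc m * B + of_nat (Suc m) * (A ^ m * (B * A)) + of_nat (Suc m) * (A ^ m * (B * B))"
    by (simp add: algebra_simps del: power_Suc)
  also have "\<dots> = A ^ Suc (Suc m) + of_nat (Suc (Suc m)) * (A ^ Suc m * B)"
  proof -
    have "B * A = A * B" using centralD[OF cA, of B] by simp
    then have "A ^ m * (B * A) = A ^ Suc m * B" by (simp add: mult.assoc[symmetric] power_Suc2 del: power_Suc)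
    then show ?thesis using BB by (simp add: algebra_simps power_Suc2 del: power_Suc)
  qed
  finally show ?case .
qed

lemma central_pow_mult: "central a \<Longrightarrow> (a * b) ^ n = a ^ n * b ^ n"
proof (induct n)
  case 0 then show ?case by simp
next
  case (Suc n)
  have "(a * b) ^ Suc n = a ^ n * b ^ n * (a * b)" by (simp only: power_Suc2 Suc)
  also have "\<dots> = a ^ n * a * (b ^ n * b)"
  proof -
    have "b ^ n * (a * b) = a * (b ^ n * b)"
      using centralD[OF Suc(2), of "b ^ n"] by (metis mult.assoc)
    then show ?thesis by (simp add: mult.assoc)
  qed
  finally show ?case by (simp only: power_Suc2)
qed

lemma kr_prod:
  fixes a1 :: "'a::ring_1"
  assumes ca1: "central a1" and ca2: "central a2" and cc: "central c"
    and s1: "b1 * b1 = 0" and s2: "b2 * b2 = 0" and sd: "d * d = 0"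
    and an12: "b1 * b2 = - (b2 * b1)" and an1d: "b1 * d = - (d * b1)" and an2d: "b2 * d = - (d * b2)"
    and cN: "central (b1 * b2)" and p0: "of_nat (Suc n) = (0::'a)"
  shows "kr n ((a1 + b1) * (a2 + b2)) (c + d) = (a1 + b1) ^ Suc n * kr n (a2 + b2) (c + d) + (a2 + b2) ^ Suc n * kr n (a1 + b1) (c + d)"
    and "kr n (c + d) ((a1 + b1) * (a2 + b2)) = (a1 + b1) ^ Suc n * kr n (c + d) (a2 + b2) + (a2 + b2) ^ Suc n * kr n (c + d) (a1 + b1)"
proof -
  define P where "P = a1 * a2"
  define N where "N = b1 * b2"
  define B where "B = a1 * b2 + b1 * a2"
  have cP: "central P" unfolding P_def by (rule central_mult[OF ca1 ca2])
  have cN': "central N" unfolding N_def by (rule cN)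
  have xy: "(a1 + b1) * (a2 + b2) = (P + N) + B"
    unfolding P_def N_def B_def by (simp add: algebra_simps)
  have cA: "central (P + N)" by (rule central_add[OF cP cN'])
  have b1a2: "b1 * a2 = a2 * b1" using centralD[OF ca2, of b1] by simp
  have BB: "B * B = 0"
  proof -
    have t1: "a1 * b2 * (a1 * b2) = 0"
      using centralD2[OF ca1, of b2 b2] s2 by (simp add: mult.assoc)
    have t4: "b1 * a2 * (b1 * a2) = 0"
      using centralD2[OF ca2, of b1 b1] s1 b1a2 by (simp add: mult.assoc)
    have t2: "a1 * b2 * (b1 * a2) = a1 * (a2 * (b2 * b1))"
      using centralD2[OF ca2, of b2 b1] b1a2 by (simp add: mult.assoc)
    have t3: "b1 * a2 * (a1 * b2) = a1 * (a2 * (b1 * b2))"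
      using centralD2[OF ca2, of b1 "a1 * b2"] centralD2[OF ca1, of b1 b2] centralD2[OF ca1, of a2 "b1 * b2"]
      by (simp add: mult.assoc)
    have "B * B = a1 * b2 * (a1 * b2) + b1 * a2 * (a1 * b2) + (a1 * b2 * (b1 * a2) + b1 * a2 * (b1 * a2))"
      unfolding B_def by (simp only: distrib_left distrib_right)
    also have "\<dots> = a1 * (a2 * (b1 * b2 + b2 * b1))"
      by (simp only: t1 t2 t3 t4 distrib_left add_0_left add_0_right)
    also have "\<dots> = 0" using an12 by simp
    finally show ?thesis .
  qed
  have Bd: "B * d = - (d * B)"
  proof -
    have "B * d = a1 * (b2 * d) + b1 * (a2 * d)" unfolding B_def by (simp add: algebra_simps)
    also have "\<dots> = - (a1 * (d * b2)) + b1 * (d * a2)" using an2d centralD[OF ca2, of d] by simp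
    also have "\<dots> = - (d * (a1 * b2)) - (d * (b1 * a2))"
      using centralD2[OF ca1, of d b2] an1d by (simp add: mult.assoc[symmetric])
    also have "\<dots> = - (d * B)" unfolding B_def by (simp add: algebra_simps)
    finally show ?thesis .
  qed
  have dB: "d * B = - (B * d)" using Bd by simp
  have NB: "N * B = 0"
  proof -
    have "N * B = b1 * (b2 * (a1 * b2)) + b1 * (b2 * b1) * a2"
      unfolding N_def B_def by (simp add: algebra_simps)
    also have "\<dots> = 0"
    proof -
      have "b2 * (a1 * b2) = 0" using centralD2[OF ca1, of b2 b2] s2 by simp
      moreover have "b1 * (b2 * b1) = 0"
      proof -
        have "b2 * b1 = - (b1 * b2)" using an12 by simp
        then have "b1 * (b2 * b1) = - (b1 * b1 * b2)" by (simp add: mult.assoc)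
        then show ?thesis using s1 by simp
      qed
      ultimately show ?thesis by simp
    qed
    finally show ?thesis .
  qed
  obtain Q where Q: "(P + N) ^ n = P ^ n + N * Q" using pow_central_sum[OF cN'] by blast
  have Pn: "P ^ n = a1 ^ n * a2 ^ n" unfolding P_def by (rule central_pow_mult[OF ca1])
  have x1: "(a1 + b1) ^ Suc n = a1 ^ Suc n" using pow_sq0_exact[OF ca1 s1, of n] by (simp only: p0 mult_zero_left add_0_right)
  have x2: "(a2 + b2) ^ Suc n = a2 ^ Suc n" using pow_sq0_exact[OF ca2 s2, of n] by (simp only: p0 mult_zero_left add_0_right)
  have k1: "kr n (a1 + b1) (c + d) = a1 ^ n * (c ^ n * (b1 * d + b1 * d))"
    by (rule kr_formula[OF ca1 cc s1 sd an1d])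
  have k2: "kr n (a2 + b2) (c + d) = a2 ^ n * (c ^ n * (b2 * d + b2 * d))"
    by (rule kr_formula[OF ca2 cc s2 sd an2d])
  have k1': "kr n (c + d) (a1 + b1) = c ^ n * (a1 ^ n * (d * b1 + d * b1))"
    by (rule kr_formula[OF cc ca1 sd s1]) (use an1d in simp)
  have k2': "kr n (c + d) (a2 + b2) = c ^ n * (a2 ^ n * (d * b2 + d * b2))"
    by (rule kr_formula[OF cc ca2 sd s2]) (use an2d in simp)
  have ca1n: "central (a1 ^ n)" and ca1s: "central (a1 ^ Suc n)" and ca2n: "central (a2 ^ n)"
    and ca2s: "central (a2 ^ Suc n)" and ccn: "central (c ^ n)"
    using ca1 ca2 cc by (simp_all only: central_pow)
  have r4: "a1 ^ n * (a1 * W) = a1 ^ Suc n * W" for W by (simp add: mult.assoc[symmetric] power_Suc2 del: power_Suc)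
  have r5: "a2 ^ n * (a2 * W) = a2 ^ Suc n * W" for W by (simp add: mult.assoc[symmetric] power_Suc2 del: power_Suc)
  note mv = centralD2[OF ca1, of "a1 ^ n"] centralD2[OF ca1, of "a1 ^ Suc n"] centralD2[OF ca1, of a2]
    centralD2[OF ca1, of "a2 ^ n"] centralD2[OF ca1, of "a2 ^ Suc n"] centralD2[OF ca1, of "c ^ n"]
    centralD2[OF ca1n, of a2] centralD2[OF ca1n, of "a2 ^ n"] centralD2[OF ca1n, of "a2 ^ Suc n"] centralD2[OF ca1n, of "c ^ n"]
    centralD2[OF ca1s, of a2] centralD2[OF ca1s, of "a2 ^ n"] centralD2[OF ca1s, of "a2 ^ Suc n"] centralD2[OF ca1s, of "c ^ n"]
    centralD2[OF ca2, of "a2 ^ n"] centralD2[OF ca2, of "a2 ^ Suc n"] centralD2[OF ca2, of "c ^ n"]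
    centralD2[OF ca2n, of "a2 ^ Suc n"] centralD2[OF ca2n, of "c ^ n"]
    centralD2[OF ca2s, of "c ^ n"]
  have Bdd: "B * d + B * d = a1 * (b2 * d + b2 * d) + a2 * (b1 * d + b1 * d)"
    unfolding B_def using centralD2[OF ca2, of b1 d] by (simp add: algebra_simps)
  have dBB: "d * B + d * B = a1 * (d * b2 + d * b2) + a2 * (d * b1 + d * b1)"
    unfolding B_def using centralD2[OF ca1, of d b2] centralD2[OF ca2, of d b1] b1a2
    by (simp add: algebra_simps)
  have NW: "N * (Q * W) = Q * (N * W)" for W
    using centralD[OF cN', of Q] by (simp add: mult.assoc[symmetric])
  show "kr n ((a1 + b1) * (a2 + b2)) (c + d) = (a1 + b1) ^ Suc n * kr n (a2 + b2) (c + d) + (a2 + b2) ^ Suc n * kr n (a1 + b1) (c + d)"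
  proof -
    have "kr n ((a1 + b1) * (a2 + b2)) (c + d) = (P + N) ^ n * (c ^ n * (B * d + B * d))"
      unfolding xy by (rule kr_formula[OF cA cc BB sd Bd])
    also have "\<dots> = P ^ n * (c ^ n * (B * d + B * d))"
    proof -
      have "N * (B * d + B * d) = 0" using NB by (simp add: distrib_left mult.assoc[symmetric])
      then have "N * (c ^ n * (B * d + B * d)) = 0"
        using centralD2[OF ccn, of N "B * d + B * d"] by simp
      then show ?thesis unfolding Q by (simp add: distrib_right mult.assoc NW)
    qed
    also have "\<dots> = a1 ^ Suc n * (a2 ^ n * (c ^ n * (b2 * d + b2 * d))) + a2 ^ Suc n * (a1 ^ n * (c ^ n * (b1 * d + b1 * d)))"
      unfolding Pn Bdd by (simp only: mult.assoc distrib_left r4 r5 mv)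
    finally show ?thesis unfolding x1 x2 k1 k2 .
  qed
  show "kr n (c + d) ((a1 + b1) * (a2 + b2)) = (a1 + b1) ^ Suc n * kr n (c + d) (a2 + b2) + (a2 + b2) ^ Suc n * kr n (c + d) (a1 + b1)"
  proof -
    have "kr n (c + d) ((a1 + b1) * (a2 + b2)) = c ^ n * ((P + N) ^ n * (d * B + d * B))"
      unfolding xy by (rule kr_formula[OF cc cA sd BB dB])
    also have "\<dots> = c ^ n * (P ^ n * (d * B + d * B))"
    proof -
      have "N * (d * B + d * B) = 0"
        using centralD2[OF cN', of d B] NB by (simp add: distrib_left)
      then show ?thesis unfolding Q by (simp add: distrib_right mult.assoc NW)
    qed
    also have "\<dots> = a1 ^ Suc n * (c ^ n * (a2 ^ n * (d * b2 + d * b2))) + a2 ^ Suc n * (c ^ n * (a1 ^ n * (d * b1 + d * b1)))"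
      unfolding Pn dBB by (simp only: mult.assoc distrib_left r4 r5 mv)
    finally show ?thesis unfolding x1 x2 k1' k2' .
  qed
qed

fun wr :: "nat \<Rightarrow> nat \<Rightarrow> (nat \<Rightarrow> 'a::ring_1) \<Rightarrow> 'a" where
  "wr n 0 u = 1"
| "wr n (Suc m) u = wr n m u * kr n (u (2 * m + 1)) (u (2 * m + 2))"

lemma wr_cong: "(\<And>j. 1 \<le> j \<Longrightarrow> j \<le> 2 * m \<Longrightarrow> u j = v j) \<Longrightarrow> wr n m u = wr n m v"
proof (induct m)
  case 0 then show ?case by simp
next
  case (Suc m)
  have "wr n m u = wr n m v" using Suc by simp
  moreover have "u (2 * m + 1) = v (2 * m + 1)" "u (2 * m + 2) = v (2 * m + 2)" using Suc(2) by auto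
  ultimately show ?case by simp
qed

lemma wr_lin:
  assumes c1: "central c1" and c2: "central c2"
    and L: "\<And>y. kr n a y = c1 * kr n b1 y + c2 * kr n b2 y"
    and R: "\<And>y. kr n y a = c1 * kr n y b1 + c2 * kr n y b2"
  shows "1 \<le> i \<Longrightarrow> i \<le> 2 * m \<Longrightarrow> wr n m (u(i := a)) = c1 * wr n m (u(i := b1)) + c2 * wr n m (u(i := b2))"
proof (induct m)
  case 0 then show ?case by simp
next
  case (Suc m)
  show ?case
  proof (cases "i \<le> 2 * m")
    case True
    have "wr n m (u(i := a)) = c1 * wr n m (u(i := b1)) + c2 * wr n m (u(i := b2))"
      by (rule Suc.hyps) (use Suc.prems True in auto)
    moreover have "(u(i := X)) (2 * m + 1) = u (2 * m + 1)" "(u(i := X)) (2 * m + 2) = u (2 * m + 2)" for X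
      using True by auto
    ultimately show ?thesis by (simp only: wr.simps distrib_right mult.assoc)
  next
    case False
    then have i: "i = 2 * m + 1 \<or> i = 2 * m + 2" using Suc by auto
    have W: "wr n m (u(i := X)) = wr n m u" for X
      by (rule wr_cong) (use False in auto)
    let ?W = "wr n m u"
    have D: "?W * (c1 * K1 + c2 * K2) = c1 * (?W * K1) + c2 * (?W * K2)" for K1 K2
      by (simp add: distrib_left centralD2[OF c1] centralD2[OF c2])
    from i show ?thesis
    proof
      assume i1: "i = 2 * m + 1"
      have e: "(u(i := X)) (2 * m + 1) = X" "(u(i := X)) (2 * m + 2) = u (2 * m + 2)" for X
        using i1 by auto
      show ?thesis by (simp only: wr.simps W e L D)
    next
      assume i2: "i = 2 * m + 2"
      have e: "(u(i := X)) (2 * m + 2) = X" "(u(i := X)) (2 * m + 1) = u (2 * m + 1)" for X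
        using i2 by auto
      show ?thesis by (simp only: wr.simps W e R D)
    qed
  qed
qed

lemma kr_scale:
  assumes c: "central c"
  shows "kr n (c * x) y = c ^ Suc n * kr n x y" and "kr n y (c * x) = c ^ Suc n * kr n y x"
proof -
  have cn: "central (c ^ n)" by (rule central_pow[OF c])
  have px: "(c * x) ^ n = c ^ n * x ^ n" by (rule central_pow_mult[OF c])
  have a1: "c * x * y - y * (c * x) = c * (x * y - y * x)"
    using centralD2[OF c, of y x] by (simp add: algebra_simps)
  have a2: "y * (c * x) - c * x * y = c * (y * x - x * y)"
    using centralD2[OF c, of y x] by (simp add: algebra_simps)
  show "kr n (c * x) y = c ^ Suc n * kr n x y"
    unfolding kr_def a1 px
    using centralD2[OF cn, of "x * y - y * x"] by (simp add: mult.assoc)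
  show "kr n y (c * x) = c ^ Suc n * kr n y x"
    unfolding kr_def a2 px
    using centralD2[OF cn, of "y * x - x * y"] centralD2[OF cn, of "y ^ n"] by (simp add: mult.assoc)
qed

definition rhom :: "('a::ring_1 \<Rightarrow> 'b::ring_1) \<Rightarrow> bool" where
  "rhom f \<longleftrightarrow> f 1 = 1 \<and> (\<forall>a b. f (a + b) = f a + f b) \<and> (\<forall>a b. f (a * b) = f a * f b)"

lemma rhom_add: "rhom f \<Longrightarrow> f (a + b) = f a + f b"
  and rhom_mult: "rhom f \<Longrightarrow> f (a * b) = f a * f b"
  and rhom_one: "rhom f \<Longrightarrow> f 1 = 1"
  by (simp_all add: rhom_def)

lemma rhom_minus: "rhom f \<Longrightarrow> f (a - b) = f a - f b"
  by (metis add_diff_cancel diff_add_cancel rhom_add)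

lemma rhom_pow: "rhom f \<Longrightarrow> f (a ^ n) = f a ^ n"
  by (induct n) (simp_all add: rhom_one rhom_mult)

lemma rhom_kr: "rhom f \<Longrightarrow> f (kr n u v) = kr n (f u) (f v)"
  by (simp add: kr_def rhom_mult rhom_minus rhom_pow)

lemma rhom_wr: "rhom f \<Longrightarrow> f (wr n m u) = wr n m (f \<circ> u)"
  by (induct m) (simp_all add: rhom_one rhom_mult rhom_kr)



lemma kappa_kr: "kappa p u v = kr (p - 1) u (v :: 'k::field ncpoly)"
  by (simp add: kappa_eq kr_def)

lemma wfun_wr: "wfun p m u = wr (p - 1) m (u :: nat \<Rightarrow> 'k::field ncpoly)"
  by (induct m) (simp_all add: ncone_eq ncmul_eq kappa_kr)

lemma rhom_ren: "rhom (ren r :: 'k::field ncpoly \<Rightarrow> _)"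
  by (simp add: rhom_def ren_one ren_add ren_mult)

lemma single_nil_central: "central (Poly_Mapping.single [] a :: 'k::field ncpoly)"
  unfolding central_def
proof
  fix z :: "'k ncpoly"
  have "Poly_Mapping.single [] a * (\<Sum>u\<in>Poly_Mapping.keys z. Poly_Mapping.single u (Poly_Mapping.lookup z u))
      = (\<Sum>u\<in>Poly_Mapping.keys z. Poly_Mapping.single u (Poly_Mapping.lookup z u)) * Poly_Mapping.single [] a"
    by (simp add: sum_distrib_left sum_distrib_right mult_single plus_list_def mult.commute)
  then show "Poly_Mapping.single [] a * z = z * Poly_Mapping.single [] a" by (simp only: pm_expand)
qed

lemma single_nil_pow: "Poly_Mapping.single [] a ^ n = (Poly_Mapping.single [] (a ^ n) :: 'k::field ncpoly)"
  by (induct n) (simp_all add: ncone_eq[symmetric] ncone_def mult_single plus_list_def mult.commute)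

lemma god_sq:
  assumes "(2::'k::field) \<noteq> 0"
  shows "god x * god x = (0 :: 'k gr)"
proof -
  have "god x * god x = - (god x * god x)" by (rule god_anti)
  then have "god x * god x + god x * god x = 0" by (metis add.inverse_inverse add.right_inverse)
  then show ?thesis by (rule gr_double_zero[OF assms])
qed

lemma god_prod_central: "central (god x * god (y :: 'k::field gr))"
  unfolding central_def
proof
  fix z :: "'k gr"
  have ev: "god x * god y * gev z = gev z * (god x * god y)" by (rule gev_central[symmetric])
  have od: "god x * god y * god z = god z * (god x * god y)"
  proof -
    have "god x * god y * god z = god x * (- (god z * god y))" by (simp add: mult.assoc god_anti[of y z])
    also have "\<dots> = - (god x * god z * god y)" by (simp add: mult.assoc)
    also have "\<dots> = god z * god x * god y" by (simp add: god_anti[of x z])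
    finally show ?thesis by (simp add: mult.assoc)
  qed
  have "god x * god y * z = god x * god y * (gev z + god z)" by (subst gev_god[of z]) (rule refl)
  also have "\<dots> = (gev z + god z) * (god x * god y)" by (simp only: distrib_left distrib_right ev od)
  finally show "god x * god y * z = z * (god x * god y)" by (simp only: gev_god[of z, symmetric])
qed

lemma gev_c: "central (gev (x :: 'k::field gr))"
  unfolding central_def by (simp add: gev_central)

lemma gr_kr_prod:
  fixes x y w :: "'k::field gr"
  assumes two: "(2::'k) \<noteq> 0" and p0: "of_nat (Suc n) = (0::'k)"
  shows "kr n (x * y) w = x ^ Suc n * kr n y w + y ^ Suc n * kr n x w"
    and "kr n w (x * y) = x ^ Suc n * kr n w y + y ^ Suc n * kr n w x"
    and "central (x ^ Suc n)"
proof -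
  have p0': "of_nat (Suc n) = (0 :: 'k gr)" by (rule gr_of_nat_zero[OF p0])
  note K = kr_prod[OF gev_c[of x] gev_c[of y] gev_c[of w] god_sq[OF two, of x] god_sq[OF two, of y] god_sq[OF two, of w]
     god_anti[of x y] god_anti[of x w] god_anti[of y w] god_prod_central[of x y] p0']
  show "kr n (x * y) w = x ^ Suc n * kr n y w + y ^ Suc n * kr n x w"
    using K(1) by (simp only: gev_god[symmetric])
  show "kr n w (x * y) = x ^ Suc n * kr n w y + y ^ Suc n * kr n w x"
    using K(2) by (simp only: gev_god[symmetric])
  have "x ^ Suc n = gev x ^ Suc n"
    using pow_sq0_exact[OF gev_c[of x] god_sq[OF two, of x], where m = n] by (simp only: gev_god[symmetric] p0' mult_zero_left add_0_right)
  then show "central (x ^ Suc n)" by (simp only: central_pow gev_c)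
qed

lemma H_rhom:
  assumes "unital_hom_G h"
  shows "rhom (\<lambda>f. Abs_gr (h f) :: 'k::field gr)"
proof -
  have h1: "h ncone = gone" and ha: "\<And>f g. h (f + g) = h f + h g" and hm: "\<And>f g. h (ncmul f g) = gmul (h f) (h g)"
    using assms by (simp_all add: unital_hom_G_def)
  have "Abs_gr (h 1) = (1 :: 'k gr)"
    by (metis Abs_gr_inverse Rep_gr_inverse UNIV_I h1 ncone_eq one_gr.rep_eq)
  moreover have "Abs_gr (h (a + b)) = Abs_gr (h a) + (Abs_gr (h b) :: 'k gr)" for a b
    by (metis Abs_gr_inverse Rep_gr_inverse UNIV_I ha plus_gr.rep_eq)
  moreover have "Abs_gr (h (a * b)) = Abs_gr (h a) * (Abs_gr (h b) :: 'k gr)" for a b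
    by (metis Abs_gr_inverse Rep_gr_inverse UNIV_I hm ncmul_eq times_gr.rep_eq)
  ultimately show ?thesis by (simp add: rhom_def)
qed

theorem lemma3p4:
  fixes p m i :: nat and \<alpha> :: "'k::field"
  assumes "prime p" and "CHAR('k) = p" and "p > 2"
    and "m \<ge> 1" and "1 \<le> i" and "i \<le> 2 * m"
  shows "(wfun p m ((ncvar :: nat \<Rightarrow> 'k ncpoly)(i := ncmul (ncvar i) (ncvar (2 * m + 1))))
           \<in> set_plus_nc
               (S0closure {ncmul (ncpow (ncvar 0) p) (wfun p j ncvar) | j. True})
               TG) \<and>
         (wfun p m ((ncvar :: nat \<Rightarrow> 'k ncpoly)(i := ncsmult \<alpha> (ncvar i)))
           = ncsmult (\<alpha> ^ p) (wfun p m ncvar))"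
proof -
  define n where "n = p - 1"
  have pn: "p = Suc n" using assms(3) by (simp add: n_def)
  have two: "(2::'k) \<noteq> 0"
  proof
    assume "(2::'k) = 0"
    then have "of_nat 2 = (0::'k)" by simp
    then have "p dvd 2" using assms(2) by (simp only: of_nat_eq_0_iff_char_dvd)
    with assms(3) show False using dvd_imp_le by fastforce
  qed
  have p0: "of_nat (Suc n) = (0::'k)" using assms(2) pn by (metis of_nat_CHAR)
  let ?S = "S0closure {ncmul (ncpow (ncvar 0) p) (wfun p j ncvar) | j. True} :: 'k ncpoly set"
  define X where "X = (ncvar :: nat \<Rightarrow> 'k ncpoly)"
  define Hm where "Hm = ncmul (ncpow (X 0) p) (wfun p m X)"
  have Hm_in: "Hm \<in> ?S" by (rule S0closure.base) (auto simp: Hm_def X_def)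
  have Hm_eq: "Hm = X 0 ^ Suc n * wr n m X"
    unfolding Hm_def ncmul_eq ncpow_eq wfun_wr n_def[symmetric] by (simp only: pn)
  define r1 where "r1 = (\<lambda>j::nat. if j = 0 then 2 * m + 1 else j)"
  define r2 where "r2 = (\<lambda>j::nat. if j = 0 then i else if j = i then 2 * m + 1 else j)"
  define E1 where "E1 = ren r1 Hm"
  define E2 where "E2 = ren r2 Hm"
  have E1_in: "E1 \<in> ?S" unfolding E1_def by (rule S0closure.endo[OF endo_ren Hm_in])
  have E2_in: "E2 \<in> ?S" unfolding E2_def by (rule S0closure.endo[OF endo_ren Hm_in])
  have renX: "ren r \<circ> X = X \<circ> r" for r by (auto simp: X_def ren_var)
  have E1_eq: "E1 = X (2 * m + 1) ^ Suc n * wr n m X"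
  proof -
    have "E1 = ren r1 (X 0) ^ Suc n * wr n m (ren r1 \<circ> X)"
      by (simp add: E1_def Hm_eq rhom_mult[OF rhom_ren] rhom_pow[OF rhom_ren] rhom_wr[OF rhom_ren])
    also have "wr n m (ren r1 \<circ> X) = wr n m X"
      unfolding renX by (rule wr_cong) (simp add: r1_def)
    finally show ?thesis by (simp add: X_def ren_var r1_def)
  qed
  have E2_eq: "E2 = X i ^ Suc n * wr n m (X(i := X (2 * m + 1)))"
  proof -
    have "E2 = ren r2 (X 0) ^ Suc n * wr n m (ren r2 \<circ> X)"
      by (simp add: E2_def Hm_eq rhom_mult[OF rhom_ren] rhom_pow[OF rhom_ren] rhom_wr[OF rhom_ren])
    also have "wr n m (ren r2 \<circ> X) = wr n m (X(i := X (2 * m + 1)))"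
      unfolding renX by (rule wr_cong) (simp add: r2_def)
    finally show ?thesis by (simp add: X_def ren_var r2_def)
  qed
  define T where "T = wfun p m (X(i := ncmul (X i) (X (2 * m + 1))))"
  have T_eq: "T = wr n m (X(i := X i * X (2 * m + 1)))"
    by (simp add: T_def wfun_wr ncmul_eq n_def)
  define Dd where "Dd = T - (E1 + E2)"
  have D_in: "Dd \<in> TG"
    unfolding TG_def
  proof (intro CollectI allI impI)
    fix h :: "'k ncpoly \<Rightarrow> 'k grass"
    assume hh: "unital_hom_G h"
    define H where "H = (\<lambda>f. Abs_gr (h f) :: 'k gr)"
    have rH: "rhom H" unfolding H_def by (rule H_rhom[OF hh])
    define v where "v = H \<circ> X"
    have HT: "H T = wr n m (v(i := v i * v (2 * m + 1)))"
    proof -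
      have "H \<circ> X(i := X i * X (2 * m + 1)) = v(i := v i * v (2 * m + 1))"
        by (auto simp: v_def rhom_mult[OF rH])
      then show ?thesis by (simp add: T_eq rhom_wr[OF rH])
    qed
    have HE1: "H E1 = v (2 * m + 1) ^ Suc n * wr n m v"
      by (simp add: E1_eq v_def rhom_mult[OF rH] rhom_pow[OF rH] rhom_wr[OF rH])
    have HE2: "H E2 = v i ^ Suc n * wr n m (v(i := v (2 * m + 1)))"
    proof -
      have "H \<circ> X(i := X (2 * m + 1)) = v(i := v (2 * m + 1))"
        by (auto simp: v_def)
      then show ?thesis by (simp add: E2_eq v_def rhom_mult[OF rH] rhom_pow[OF rH] rhom_wr[OF rH])
    qed
    have "wr n m (v(i := v i * v (2 * m + 1))) =
          v i ^ Suc n * wr n m (v(i := v (2 * m + 1))) + v (2 * m + 1) ^ Suc n * wr n m (v(i := v i))"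
      by (rule wr_lin[OF gr_kr_prod(3)[OF two p0] gr_kr_prod(3)[OF two p0] gr_kr_prod(1)[OF two p0] gr_kr_prod(2)[OF two p0]])
         (use assms in auto)
    then have "H T = H E2 + H E1" unfolding HT HE1 HE2 by simp
    then have "H Dd = 0" unfolding Dd_def by (simp add: rhom_minus[OF rH] rhom_add[OF rH])
    then have "Rep_gr (H Dd) = Rep_gr 0" by simp
    then show "h Dd = 0" by (simp add: H_def Abs_gr_inverse zero_gr.rep_eq)
  qed
  have part1: "T \<in> set_plus_nc ?S TG"
    unfolding set_plus_nc_def
  proof (intro CollectI exI conjI)
    show "T = (E1 + E2) + Dd" by (simp add: Dd_def)
    show "E1 + E2 \<in> ?S" by (rule S0closure.add[OF E1_in E2_in])
    show "Dd \<in> TG" by (rule D_in)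
  qed
  define C where "C = (Poly_Mapping.single [] \<alpha> :: 'k ncpoly)"
  have cC: "central C" unfolding C_def by (rule single_nil_central)
  have part2: "wfun p m (X(i := ncsmult \<alpha> (X i))) = ncsmult (\<alpha> ^ p) (wfun p m X)"
  proof -
    have "wr n m (X(i := C * X i)) = C ^ Suc n * wr n m (X(i := X i)) + 0 * wr n m (X(i := X i))"
      by (rule wr_lin[OF central_pow[OF cC] central_zero]) (use assms in \<open>auto simp: kr_scale[OF cC]\<close>)
    then have "wr n m (X(i := C * X i)) = C ^ Suc n * wr n m X" by simp
    moreover have "C ^ Suc n = Poly_Mapping.single [] (\<alpha> ^ p)" by (simp only: C_def single_nil_pow pn)
    ultimately show ?thesis
      by (simp add: wfun_wr ncsmult_eq C_def n_def)
  qed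
  show ?thesis using part1 part2 by (simp add: T_def X_def)
qed

end
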